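(* Let $S$ be a poset, $S\otimes_i G_i$ a terminating ordered join, and $\sigma\colon S\to S$ a weakly order-preserving involution. If $G_i\simeq_1 G_{\sigma(i)}$ for all $i\in S$ and $\sigma$ has no fixed points, then $S\otimes_i G_i\simeq_0\mathbf{0}$.
   Context: All games are impartial combinatorial games under normal play; a game is determined by its set of options, and $G \to G'$ means $G'$ is an option of $G$. A game is terminating if it admits no infinite sequence of moves. $\mathbf{0}$ denotes the game with no options. The Grundy number of a terminating game $G$ is the ordinal $\Gamma_0(G)=\operatorname{mex}\{\Gamma_0(G') : G\to G'\}$, where $\operatorname{mex}\Lambda$ is the least ordinal not in the set of ordinals $\Lambda$. The Grundy set is $\Gamma_1(G)=\{\Gamma_0(G') : G\to G'\}$. $G\simeq_0 H$ means $\Gamma_0(G)=\Gamma_0(H)$; $G\simeq_1 H$ means $\Gamma_1(G)=\Gamma_1(H)$. Ordered join: for a poset $S$ and a family $(G_i)_{i\in S}$ of games, $S \otimes_i G_i$ is the game whose options are exactly the ordered joins $S \otimes_i G'_i$ obtained by choosing one $i_0\in S$ and an option $G_{i_0}\to G'_{i_0}$, and setting $G'_i=\mathbf{0}$ for all $i>i_0$ and $G'_i=G_i$ for all other $i\ne i_0$. An involution $\sigma\colon S\to S$ (i.e. $\sigma\circ\sigma=\mathrm{id}$) is weakly order-preserving if for each $i\in S$ the set $\{j\in S : i<j \text{ or } \sigma(i)<j\}$ is mapped onto itself by $\sigma$. *)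

theory Defs
  imports Main
begin

(* Games are represented as positions (vertices) of a game graph given by a move
   relation M :: 'g => 'g => bool; "M x y" means y is an option of x. *)

definition terminating :: "('g \<Rightarrow> 'g \<Rightarrow> bool) \<Rightarrow> 'g \<Rightarrow> bool" where
  "terminating M x \<longleftrightarrow> \<not> (\<exists>f. f 0 = x \<and> (\<forall>n. M (f n) (f (Suc n))))"

definition options :: "('g \<Rightarrow> 'g \<Rightarrow> bool) \<Rightarrow> 'g \<Rightarrow> 'g set" where
  "options M x = {y. M x y}"

definition grundy_fun :: "('g \<Rightarrow> 'g \<Rightarrow> bool) \<Rightarrow> ('g \<Rightarrow> 'o::wellorder) \<Rightarrow> bool" where
  "grundy_fun M \<gamma> \<longleftrightarrow>
     (\<forall>x. terminating M x \<longrightarrow>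
        \<gamma> x \<notin> \<gamma> ` options M x \<and> (\<forall>a. a < \<gamma> x \<longrightarrow> a \<in> \<gamma> ` options M x))"

definition ozero :: "'o::wellorder" where
  "ozero = (LEAST a. True)"

(* Positions are families f :: 'i => 'g option, where None stands for the game 0.
   A move chooses i0 in S and a move G_{i0} -> G'_{i0}, replaces the entries at
   all i > i0 (i in S) by 0, and leaves the others unchanged. *)
definition join_move :: "'i::order set \<Rightarrow> ('g \<Rightarrow> 'g \<Rightarrow> bool)
      \<Rightarrow> ('i \<Rightarrow> 'g option) \<Rightarrow> ('i \<Rightarrow> 'g option) \<Rightarrow> bool" where
  "join_move S M f f' \<longleftrightarrow>
     (\<exists>i0\<in>S. \<exists>g g'. f i0 = Some g \<and> M g g' \<and>
        f' = (\<lambda>j. if j = i0 then Some g' else if j \<in> S \<and> i0 < j then None else f j))"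

definition join_pos :: "'i set \<Rightarrow> ('i \<Rightarrow> 'g) \<Rightarrow> ('i \<Rightarrow> 'g option)" where
  "join_pos S G = (\<lambda>i. if i \<in> S then Some (G i) else None)"

definition involution_on :: "'i set \<Rightarrow> ('i \<Rightarrow> 'i) \<Rightarrow> bool" where
  "involution_on S \<sigma> \<longleftrightarrow> (\<forall>i\<in>S. \<sigma> i \<in> S \<and> \<sigma> (\<sigma> i) = i)"

definition weakly_order_preserving :: "'i::order set \<Rightarrow> ('i \<Rightarrow> 'i) \<Rightarrow> bool" where
  "weakly_order_preserving S \<sigma> \<longleftrightarrow>
     (\<forall>i\<in>S. \<sigma> ` {j\<in>S. i < j \<or> \<sigma> i < j} = {j\<in>S. i < j \<or> \<sigma> i < j})"

end

theory Submission
  imports Defs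
begin

definition Inv :: "'i::order set \<Rightarrow> ('g \<Rightarrow> 'g \<Rightarrow> bool) \<Rightarrow> ('g \<Rightarrow> 'o) \<Rightarrow> ('i \<Rightarrow> 'i) \<Rightarrow> ('i \<Rightarrow> 'g option) \<Rightarrow> bool" where
  "Inv S M \<gamma> \<sigma> f \<longleftrightarrow> (\<forall>i\<in>S. (f i = None \<longleftrightarrow> f (\<sigma> i) = None) \<and>
     (\<forall>g h. f i = Some g \<longrightarrow> f (\<sigma> i) = Some h \<longrightarrow> \<gamma> g = \<gamma> h \<and>
        ((\<exists>j\<in>S. (i < j \<or> \<sigma> i < j) \<and> f j \<noteq> None) \<longrightarrow> \<gamma> ` options M g = \<gamma> ` options M h)))"

lemma term_step:
  assumes "terminating M x" "M x y" shows "terminating M y"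
proof -
  { fix f assume f: "f 0 = y" "\<forall>n. M (f n) (f (Suc n))"
    define f' where "f' n = (case n of 0 \<Rightarrow> x | Suc m \<Rightarrow> f m)" for n
    have "f' 0 = x \<and> (\<forall>n. M (f' n) (f' (Suc n)))"
      using f assms(2) by (auto simp: f'_def split: nat.split)
    hence False using assms(1) unfolding terminating_def by blast }
  thus ?thesis unfolding terminating_def by blast
qed

lemma term_comp:
  assumes "terminating (join_move S M) f" "i \<in> S" "f i = Some g"
  shows "terminating M g"
proof -
  { fix h assume h: "h 0 = g" "\<forall>n. M (h n) (h (Suc n))"
    define F where "F n = (if n = 0 then f else (\<lambda>j. if j = i then Some (h n) else if j \<in> S \<and> i < j then None else f j))" for n
    have "\<forall>n. join_move S M (F n) (F (Suc n))"
    proof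
      fix n
      show "join_move S M (F n) (F (Suc n))"
        unfolding join_move_def
        apply (rule bexI[of _ i])
         apply (rule exI[of _ "h n"], rule exI[of _ "h (Suc n)"])
        using h assms by (auto simp: F_def)
    qed
    moreover have "F 0 = f" by (simp add: F_def)
    ultimately have False using assms(1) unfolding terminating_def by blast }
  thus ?thesis unfolding terminating_def by blast
qed

lemma wfR: "wf {(y,x). terminating J x \<and> J x y}"
proof -
  { fix f assume f: "\<forall>i. (f (Suc i), f i) \<in> {(y,x). terminating J x \<and> J x y}"
    hence "terminating J (f 0)" "\<forall>n. J (f n) (f (Suc n))" by auto
    hence False unfolding terminating_def by blast }
  thus ?thesis unfolding wf_iff_no_infinite_down_chain by blast
qed

lemma grundy_eq:
  assumes "grundy_fun M \<gamma>" "terminating M x" "terminating M y"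
    "\<gamma> ` options M x = \<gamma> ` options M y"
  shows "\<gamma> x = \<gamma> y"
proof -
  have a: "\<gamma> x \<notin> \<gamma> ` options M x" "\<forall>a. a < \<gamma> x \<longrightarrow> a \<in> \<gamma> ` options M x"
    "\<gamma> y \<notin> \<gamma> ` options M y" "\<forall>a. a < \<gamma> y \<longrightarrow> a \<in> \<gamma> ` options M y"
    using assms unfolding grundy_fun_def by blast+
  show ?thesis using a assms(4) by (metis linorder_neqE)
qed

lemma ozero_le: "ozero \<le> (a::'o::wellorder)"
  unfolding ozero_def by (rule Least_le) simp

lemma core:
  fixes S :: "'i::order set"
  assumes gamma: "grundy_fun M \<gamma>"
    and inv: "involution_on S \<sigma>"
    and wop: "weakly_order_preserving S \<sigma>"
    and nofix: "\<forall>i\<in>S. \<sigma> i \<noteq> i"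
    and I: "Inv S M \<gamma> \<sigma> f"
    and tc: "\<forall>i\<in>S. \<forall>x. f i = Some x \<longrightarrow> terminating M x"
    and i0S: "i0 \<in> S" and fi0: "f i0 = Some g" and Mg: "M g g'"
  shows "\<exists>f''. join_move S M (\<lambda>j. if j = i0 then Some g' else if j \<in> S \<and> i0 < j then None else f j) f''
              \<and> Inv S M \<gamma> \<sigma> f''"
proof -
  let ?f' = "\<lambda>j. if j = i0 then Some g' else if j \<in> S \<and> i0 < j then None else f j"
  define k where "k = \<sigma> i0"
  define U where "U = {j\<in>S. i0 < j \<or> k < j}"
  have kS: "k \<in> S" and kk: "\<sigma> k = i0" using inv i0S unfolding involution_on_def k_def by auto
  have ki: "k \<noteq> i0" using nofix i0S k_def by auto
  have wU: "\<sigma> ` U = U" using wop i0S unfolding weakly_order_preserving_def U_def k_def by blast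
  have Usig: "\<sigma> j \<in> U \<longleftrightarrow> j \<in> U" if "j \<in> S" for j
  proof
    assume "\<sigma> j \<in> U"
    then obtain u where u: "u \<in> U" "\<sigma> j = \<sigma> u" using wU by (metis imageE)
    have "u \<in> S" using u U_def by auto
    hence "\<sigma> (\<sigma> u) = u" "\<sigma> (\<sigma> j) = j" using inv that unfolding involution_on_def by auto
    thus "j \<in> U" using u by metis
  next
    assume "j \<in> U" thus "\<sigma> j \<in> U" using wU by blast
  qed
  have nlt1: "\<not> i0 < k"
  proof
    assume "i0 < k"
    hence "k \<in> U" using kS U_def by auto
    hence "i0 \<in> U" using Usig[OF kS] kk by simp
    thus False using \<open>i0 < k\<close> U_def by auto
  qed
  have nlt2: "\<not> k < i0"
  proof
    assume "k < i0"
    hence "i0 \<in> U" using i0S U_def by auto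
    hence "k \<in> U" using Usig[OF i0S] k_def by simp
    thus False using \<open>k < i0\<close> U_def by auto
  qed
  have i0U: "i0 \<notin> U" and kU: "k \<notin> U" using nlt1 nlt2 U_def by auto
  have I0: "(f i0 = None \<longleftrightarrow> f k = None) \<and> (\<forall>g h. f i0 = Some g \<longrightarrow> f k = Some h \<longrightarrow> \<gamma> g = \<gamma> h \<and>
        ((\<exists>j\<in>S. (i0 < j \<or> k < j) \<and> f j \<noteq> None) \<longrightarrow> \<gamma> ` options M g = \<gamma> ` options M h))"
    using I i0S unfolding Inv_def k_def by blast
  then obtain h where fk: "f k = Some h" using fi0 by auto
  have ggh: "\<gamma> g = \<gamma> h" using I0 fi0 fk by blast
  have tg: "terminating M g" and th: "terminating M h" using tc i0S kS fi0 fk by auto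
  have tg': "terminating M g'" using term_step[OF tg Mg] .
  have opt: "g' \<in> options M g" using Mg by (simp add: options_def)
  have gr: "\<And>x. terminating M x \<Longrightarrow> \<gamma> x \<notin> \<gamma> ` options M x \<and> (\<forall>a. a < \<gamma> x \<longrightarrow> a \<in> \<gamma> ` options M x)"
    using gamma unfolding grundy_fun_def by blast
  have neq: "\<gamma> g' \<noteq> \<gamma> g" using gr[OF tg] opt by (metis imageI)
  have f'k: "?f' k = Some h" using ki nlt1 fk by simp
  have f'i0: "?f' i0 = Some g'" by simp
  have respk: "\<exists>f''. join_move S M ?f' f'' \<and> Inv S M \<gamma> \<sigma> f''"
    if hh: "M h h'" "\<gamma> h' = \<gamma> g'" for h'
  proof -
    define f'' where "f'' = (\<lambda>j. if j = k then Some h' else if j \<in> S \<and> k < j then None else ?f' j)"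
    have J: "join_move S M ?f' f''"
      unfolding join_move_def f''_def using kS f'k hh by blast
    have f''c: "f'' j = (if j = k then Some h' else if j = i0 then Some g' else if j \<in> U then None else f j)" for j
      unfolding f''_def U_def using ki nlt2 by auto
    have "Inv S M \<gamma> \<sigma> f''"
      unfolding Inv_def
    proof (intro ballI conjI allI impI)
      fix i assume iS: "i \<in> S"
      have si: "\<sigma> i \<in> S" "\<sigma> (\<sigma> i) = i" using inv iS unfolding involution_on_def by auto
      show "(f'' i = None) = (f'' (\<sigma> i) = None)"
      proof (cases "i = i0 \<or> i = k")
        case True thus ?thesis using kk k_def f''c ki by auto
      next
        case False
        hence "\<sigma> i \<noteq> i0" "\<sigma> i \<noteq> k" using si kk k_def by auto
        thus ?thesis using False f''c Usig[OF iS] I iS unfolding Inv_def by auto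
      qed
      fix g1 h1 assume a: "f'' i = Some g1" "f'' (\<sigma> i) = Some h1"
      show "\<gamma> g1 = \<gamma> h1"
      proof (cases "i = i0 \<or> i = k")
        case True thus ?thesis using kk k_def f''c ki a hh by auto
      next
        case False
        hence "\<sigma> i \<noteq> i0" "\<sigma> i \<noteq> k" using si kk k_def by auto
        thus ?thesis using False f''c Usig[OF iS] I iS a unfolding Inv_def
          by (auto split: if_splits)
      qed
      assume ex: "\<exists>j\<in>S. (i < j \<or> \<sigma> i < j) \<and> f'' j \<noteq> None"
      show "\<gamma> ` options M g1 = \<gamma> ` options M h1"
      proof (cases "i = i0 \<or> i = k")
        case True
        hence "\<forall>j\<in>S. (i < j \<or> \<sigma> i < j) \<longrightarrow> j \<in> U" using U_def kk k_def by auto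
        then obtain j where "j \<in> U" "f'' j \<noteq> None" using ex by blast
        moreover have "j \<noteq> k" "j \<noteq> i0" using \<open>j \<in> U\<close> i0U kU by auto
        ultimately have False using f''c[of j] by simp
        thus ?thesis ..
      next
        case False
        hence n: "\<sigma> i \<noteq> i0" "\<sigma> i \<noteq> k" using si kk k_def by auto
        have "\<exists>j\<in>S. (i < j \<or> \<sigma> i < j) \<and> f j \<noteq> None"
          using ex f''c fi0 fk by (metis option.distinct(1))
        moreover have "f i = Some g1" "f (\<sigma> i) = Some h1" using a f''c False n
          by (auto split: if_splits)
        ultimately show ?thesis using I iS unfolding Inv_def by blast
      qed
    qed
    thus ?thesis using J by blast
  qed
  show ?thesis
  proof (cases "\<exists>j\<in>S. (i0 < j \<or> k < j) \<and> f j \<noteq> None")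
    case True
    hence "\<gamma> ` options M g = \<gamma> ` options M h" using I0 fi0 fk by blast
    then obtain h' where "h' \<in> options M h" "\<gamma> h' = \<gamma> g'" using opt by (metis imageE imageI)
    thus ?thesis using respk by (simp add: options_def)
  next
    case B: False
    show ?thesis
    proof (cases "\<gamma> g' < \<gamma> h")
      case True
      then obtain h' where "h' \<in> options M h" "\<gamma> h' = \<gamma> g'" using gr[OF th] by (metis imageE)
      thus ?thesis using respk by (simp add: options_def)
    next
      case False
      hence "\<gamma> h < \<gamma> g'" using neq ggh by auto
      then obtain g'' where g'': "g'' \<in> options M g'" "\<gamma> g'' = \<gamma> h" using gr[OF tg'] by (metis imageE)
      define f'' where "f'' = (\<lambda>j. if j = i0 then Some g'' else if j \<in> S \<and> i0 < j then None else ?f' j)"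
      have J: "join_move S M ?f' f''"
        unfolding join_move_def f''_def using i0S g'' by (auto simp: options_def)
      have f''c: "f'' = f(i0 := Some g'')"
        using B by (auto simp: f''_def fun_eq_iff)
      have "Inv S M \<gamma> \<sigma> f''"
        unfolding Inv_def
      proof (intro ballI conjI allI impI)
        fix i assume iS: "i \<in> S"
        have si: "\<sigma> i \<in> S" "\<sigma> (\<sigma> i) = i" using inv iS unfolding involution_on_def by auto
        have Ii: "(f i = None \<longleftrightarrow> f (\<sigma> i) = None) \<and> (\<forall>g h. f i = Some g \<longrightarrow> f (\<sigma> i) = Some h \<longrightarrow> \<gamma> g = \<gamma> h \<and>
        ((\<exists>j\<in>S. (i < j \<or> \<sigma> i < j) \<and> f j \<noteq> None) \<longrightarrow> \<gamma> ` options M g = \<gamma> ` options M h))"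
          using I iS unfolding Inv_def by blast
        show "(f'' i = None) = (f'' (\<sigma> i) = None)"
        proof (cases "i = i0 \<or> i = k")
          case True thus ?thesis using kk k_def f''c ki fk by auto
        next
          case False
          have "\<sigma> i \<noteq> i0" proof assume "\<sigma> i = i0" hence "\<sigma> (\<sigma> i) = \<sigma> i0" by simp thus False using False si(2) k_def by simp qed
          hence "f'' i = f i" "f'' (\<sigma> i) = f (\<sigma> i)" using False f''c by auto
          thus ?thesis using Ii by simp
        qed
        fix g1 h1 assume a: "f'' i = Some g1" "f'' (\<sigma> i) = Some h1"
        show "\<gamma> g1 = \<gamma> h1"
        proof (cases "i = i0 \<or> i = k")
          case True thus ?thesis using kk k_def f''c ki a g'' fk by auto
        next
          case False
          have "\<sigma> i \<noteq> i0" proof assume "\<sigma> i = i0" hence "\<sigma> (\<sigma> i) = \<sigma> i0" by simp thus False using False si(2) k_def by simp qed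
          hence "f'' i = f i" "f'' (\<sigma> i) = f (\<sigma> i)" using False f''c by auto
          thus ?thesis using Ii a by simp
        qed
        assume ex: "\<exists>j\<in>S. (i < j \<or> \<sigma> i < j) \<and> f'' j \<noteq> None"
        show "\<gamma> ` options M g1 = \<gamma> ` options M h1"
        proof (cases "i = i0 \<or> i = k")
          case True
          hence "\<forall>j\<in>S. (i < j \<or> \<sigma> i < j) \<longrightarrow> (i0 < j \<or> k < j)" using kk k_def by auto
          then obtain j where j: "j \<in> S" "i0 < j \<or> k < j" "f'' j \<noteq> None" using ex by blast
          hence "j \<noteq> i0" using i0U U_def by auto
          hence "f'' j = f j" using f''c by simp
          hence False using B j by auto
          thus ?thesis ..
        next
          case False
          have n: "\<sigma> i \<noteq> i0" proof assume "\<sigma> i = i0" hence "\<sigma> (\<sigma> i) = \<sigma> i0" by simp thus False using False si(2) k_def by simp qed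
          have "\<exists>j\<in>S. (i < j \<or> \<sigma> i < j) \<and> f j \<noteq> None"
          proof -
            obtain j where j: "j \<in> S" "i < j \<or> \<sigma> i < j" "f'' j \<noteq> None" using ex by blast
            have "f j \<noteq> None" using j(3) f''c fi0 by (cases "j = i0") auto
            thus ?thesis using j by blast
          qed
          moreover have "f i = Some g1" "f (\<sigma> i) = Some h1" using a f''c False n by auto
          ultimately show ?thesis using Ii by blast
        qed
      qed
      thus ?thesis using J by blast
    qed
  qed
qed


lemma main_claim:
  fixes S :: "'i::order set" and \<delta> :: "('i \<Rightarrow> 'g option) \<Rightarrow> 'o::wellorder"
    and \<gamma> :: "'g \<Rightarrow> 'o"
  assumes gamma: "grundy_fun M \<gamma>"
    and delta: "grundy_fun (join_move S M) \<delta>"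
    and inv: "involution_on S \<sigma>"
    and wop: "weakly_order_preserving S \<sigma>"
    and nofix: "\<forall>i\<in>S. \<sigma> i \<noteq> i"
  shows "terminating (join_move S M) f \<Longrightarrow> Inv S M \<gamma> \<sigma> f \<Longrightarrow> \<delta> f = ozero"
proof (induction f rule: wf_induct[OF wf_trancl[OF wfR[of "join_move S M"]]])
  case (1 f)
  let ?J = "join_move S M"
  let ?R = "{(y,x). terminating ?J x \<and> ?J x y}"
  have T: "terminating ?J f" and I: "Inv S M \<gamma> \<sigma> f" using 1 by auto
  have grd: "\<And>x. terminating ?J x \<Longrightarrow> \<delta> x \<notin> \<delta> ` options ?J x \<and> (\<forall>a. a < \<delta> x \<longrightarrow> a \<in> \<delta> ` options ?J x)"
    using delta unfolding grundy_fun_def by blast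
  show ?case
  proof (rule ccontr)
    assume "\<delta> f \<noteq> ozero"
    hence "ozero < \<delta> f" using ozero_le[of "\<delta> f"] by auto
    then obtain f' where f': "?J f f'" "\<delta> f' = ozero" using grd[OF T] by (auto simp: options_def)
    then obtain i0 g g' where m: "i0 \<in> S" "f i0 = Some g" "M g g'"
      "f' = (\<lambda>j. if j = i0 then Some g' else if j \<in> S \<and> i0 < j then None else f j)"
      unfolding join_move_def by blast
    have tc: "\<forall>i\<in>S. \<forall>x. f i = Some x \<longrightarrow> terminating M x" using term_comp[OF T] by blast
    obtain f'' where f'': "?J f' f''" "Inv S M \<gamma> \<sigma> f''"
      using core[OF gamma inv wop nofix I tc m(1,2,3)] m(4) by blast
    have T': "terminating ?J f'" using term_step[of ?J f f', OF T f'(1)] .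
    have T'': "terminating ?J f''" using term_step[of ?J f' f'', OF T' f''(1)] .
    have r1: "(f', f) \<in> ?R" using T f'(1) by simp
    have r2: "(f'', f') \<in> ?R" using T' f''(1) by simp
    have "(f'', f) \<in> ?R\<^sup>+" by (rule trancl_into_trancl2[OF r2 r_into_trancl[OF r1]])
    hence "\<delta> f'' = ozero" using 1(1) T'' f''(2) by (simp only:)
    hence "\<delta> f' \<in> \<delta> ` options ?J f'" using f'(2) f''(1) unfolding options_def by (metis (mono_tags) CollectI imageI)
    thus False using grd[OF T'] by blast
  qed
qed

theorem mainTheorem8:
  fixes S :: "'i::order set"
    and M :: "'g \<Rightarrow> 'g \<Rightarrow> bool"
    and G :: "'i \<Rightarrow> 'g"
    and \<sigma> :: "'i \<Rightarrow> 'i"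
    and \<gamma> :: "'g \<Rightarrow> 'o::wellorder"
    and \<delta> :: "('i \<Rightarrow> 'g option) \<Rightarrow> 'o"
  assumes gamma: "grundy_fun M \<gamma>"
    and delta: "grundy_fun (join_move S M) \<delta>"
    and termin: "terminating (join_move S M) (join_pos S G)"
    and inv: "involution_on S \<sigma>"
    and wop: "weakly_order_preserving S \<sigma>"
    and sim1: "\<forall>i\<in>S. \<gamma> ` options M (G i) = \<gamma> ` options M (G (\<sigma> i))"
    and nofix: "\<forall>i\<in>S. \<sigma> i \<noteq> i"
  shows "\<delta> (join_pos S G) = ozero"
proof -
  have "Inv S M \<gamma> \<sigma> (join_pos S G)"
    unfolding Inv_def
  proof (intro ballI)
    fix i assume iS: "i \<in> S"
    have si: "\<sigma> i \<in> S" using inv iS unfolding involution_on_def by auto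
    have t1: "terminating M (G i)" and t2: "terminating M (G (\<sigma> i))"
      using term_comp[OF termin] iS si by (auto simp: join_pos_def)
    have eq: "\<gamma> (G i) = \<gamma> (G (\<sigma> i))" using grundy_eq[OF gamma t1 t2] sim1 iS by blast
    show "(join_pos S G i = None \<longleftrightarrow> join_pos S G (\<sigma> i) = None) \<and>
     (\<forall>g h. join_pos S G i = Some g \<longrightarrow> join_pos S G (\<sigma> i) = Some h \<longrightarrow> \<gamma> g = \<gamma> h \<and>
        ((\<exists>j\<in>S. (i < j \<or> \<sigma> i < j) \<and> join_pos S G j \<noteq> None) \<longrightarrow> \<gamma> ` options M g = \<gamma> ` options M h))"
      using iS si eq sim1 by (auto simp: join_pos_def)
  qed
  thus ?thesis using main_claim[OF gamma delta inv wop nofix termin] by blast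
qed

end
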